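(* Let $f$ be an invertible $\mathbb F_q$-linearised polynomial over $\mathbb F_{q^h}$, and take $a \in \mathbb F_{q^h}$. Then $f(a f^{-1}(X))$ is linear if and only if $f$ is $\mathbb F_q(a)$-semi-linear.
   Context: Let $q$ be a prime power and $h \geq 1$. An $\mathbb F_q$-linearised polynomial over $\mathbb F_{q^h}$ is a polynomial of the form $f(X) = \sum_{l=0}^{h-1} f_l X^{q^l}$ with coefficients $f_l \in \mathbb F_{q^h}$; it defines an $\mathbb F_q$-linear map $\mathbb F_{q^h} \to \mathbb F_{q^h}$, and it is called invertible if this map is bijective, in which case $f^{-1}$ denotes the inverse map, which is again an $\mathbb F_q$-linearised polynomial. Identities between linearised polynomials are understood as identities of functions on $\mathbb F_{q^h}$ (written $\equiv$). "$f(a f^{-1}(X))$ is linear" means $f(a f^{-1}(X)) \equiv bX$ for some constant $b \in \mathbb F_{q^h}$. $f$ is called $\mathbb F_q(a)$-semi-linear if there exists a field automorphism $\sigma$ of $\mathbb F_{q^h}$ such that $f(\alpha X) = \alpha^\sigma f(X)$ for all $\alpha \in \mathbb F_q(a)$ and all $X \in \mathbb F_{q^h}$. *)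

theory Defs
  imports Main "HOL-Number_Theory.Prime_Powers"
begin

text \<open>The ambient field F_{q^h} is a finite field type 'a with CARD('a) = q^h.
  The subfield F_q is the set of elements fixed by x maps to x^q.\<close>

definition Fq :: "nat \<Rightarrow> 'a::field set" where
  "Fq q = {x. x ^ q = x}"

definition linearised :: "nat \<Rightarrow> nat \<Rightarrow> (nat \<Rightarrow> 'a::field) \<Rightarrow> 'a \<Rightarrow> 'a" where
  "linearised q h c x = (\<Sum>l<h. c l * x ^ (q ^ l))"

definition is_subfield :: "'a::field set \<Rightarrow> bool" where
  "is_subfield S \<longleftrightarrow> 0 \<in> S \<and> 1 \<in> S \<and>
     (\<forall>x\<in>S. \<forall>y\<in>S. x + y \<in> S \<and> x * y \<in> S) \<and>
     (\<forall>x\<in>S. - x \<in> S \<and> inverse x \<in> S)"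

definition Fq_adj :: "nat \<Rightarrow> 'a::field \<Rightarrow> 'a set" where
  "Fq_adj q a = \<Inter> {S. is_subfield S \<and> Fq q \<subseteq> S \<and> a \<in> S}"

definition field_automorphism :: "('a::field \<Rightarrow> 'a) \<Rightarrow> bool" where
  "field_automorphism \<sigma> \<longleftrightarrow> bij \<sigma> \<and>
     (\<forall>x y. \<sigma> (x + y) = \<sigma> x + \<sigma> y) \<and> (\<forall>x y. \<sigma> (x * y) = \<sigma> x * \<sigma> y) \<and> \<sigma> 1 = 1"

definition semi_linear_over :: "'a::field set \<Rightarrow> ('a \<Rightarrow> 'a) \<Rightarrow> bool" where
  "semi_linear_over K f \<longleftrightarrow>
     (\<exists>\<sigma>. field_automorphism \<sigma> \<and> (\<forall>\<alpha>\<in>K. \<forall>x. f (\<alpha> * x) = \<sigma> \<alpha> * f x))"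

end

theory Submission
  imports Defs "HOL-Computational_Algebra.Primes" "HOL-Computational_Algebra.Polynomial"
begin

lemma frob_add_prime:
  fixes x y :: "'a::comm_ring_1"
  assumes p: "prime p" and z: "of_nat p = (0::'a)"
  shows "(x + y) ^ p = x ^ p + y ^ p"
proof -
  have p0: "p \<noteq> 0" using p by auto
  have "(x + y) ^ p = (\<Sum>k\<in>{..p}. of_nat (p choose k) * x ^ k * y ^ (p - k))"
    by (rule binomial_ring)
  also have "\<dots> = (\<Sum>k\<in>{0,p}. of_nat (p choose k) * x ^ k * y ^ (p - k))"
  proof (rule sum.mono_neutral_right)
    show "\<forall>k\<in>{..p} - {0, p}. of_nat (p choose k) * x ^ k * y ^ (p - k) = 0"
    proof
      fix k assume k: "k \<in> {..p} - {0, p}"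
      then have "p dvd (p choose k)" using p p0 by (intro dvd_choose_prime) auto
      then obtain m where "p choose k = p * m" by (auto simp: dvd_def)
      then have "of_nat (p choose k) = (0::'a)" using z by simp
      then show "of_nat (p choose k) * x ^ k * y ^ (p - k) = 0" by simp
    qed
  qed auto
  also have "\<dots> = x ^ p + y ^ p" using p0 by (simp add: add.commute)
  finally show ?thesis .
qed

lemma frob_add_pow:
  fixes x y :: "'a::comm_ring_1"
  assumes "\<And>x y::'a. (x + y) ^ p = x ^ p + y ^ p"
  shows "(x + y) ^ (p ^ j) = x ^ (p ^ j) + y ^ (p ^ j)"
proof (induction j)
  case 0 then show ?case by simp
next
  case (Suc j)
  have "(x + y) ^ (p ^ Suc j) = ((x + y) ^ (p ^ j)) ^ p" by (simp only: power_Suc2 power_mult)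
  also have "\<dots> = (x ^ (p ^ j)) ^ p + (y ^ (p ^ j)) ^ p" using Suc assms by simp
  also have "\<dots> = x ^ (p ^ Suc j) + y ^ (p ^ Suc j)" by (simp only: power_Suc2 power_mult)
  finally show ?case .
qed

lemma fq_pow:
  fixes x :: "'a::comm_ring_1"
  assumes "x ^ q = x"
  shows "x ^ (q ^ l) = x"
proof (induction l)
  case 0 then show ?case by simp
next
  case (Suc l)
  have "x ^ (q ^ Suc l) = (x ^ (q ^ l)) ^ q" by (simp only: power_Suc2 power_mult)
  then show ?case using Suc assms by simp
qed

theorem lemma5p2:
  fixes q h :: nat and c :: "nat \<Rightarrow> 'a::{field,finite}" and a :: 'a
  assumes "primepow q" and "h \<ge> 1" and "card (UNIV :: 'a set) = q ^ h"
    and "bij (linearised q h c)"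
  shows "(\<exists>b. \<forall>x. linearised q h c (a * inv (linearised q h c) x) = b * x)
     \<longleftrightarrow> semi_linear_over (Fq_adj q a) (linearised q h c)"
proof
  assume "semi_linear_over (Fq_adj q a) (linearised q h c)"
  then obtain \<sigma> where hs: "\<forall>\<alpha>\<in>Fq_adj q a. \<forall>x. linearised q h c (\<alpha> * x) = \<sigma> \<alpha> * linearised q h c x"
    unfolding semi_linear_over_def by blast
  have "a \<in> Fq_adj q a" unfolding Fq_adj_def by blast
  then have "\<forall>x. linearised q h c (a * inv (linearised q h c) x) = \<sigma> a * x"
    using hs assms(4) by (simp add: bij_is_surj surj_f_inv_f)
  then show "\<exists>b. \<forall>x. linearised q h c (a * inv (linearised q h c) x) = b * x" by blast
next
  assume "\<exists>b. \<forall>x. linearised q h c (a * inv (linearised q h c) x) = b * x"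
  then obtain b where hb0: "\<forall>x. linearised q h c (a * inv (linearised q h c) x) = b * x" by blast
  define F where "F = linearised q h c"
  have Fdef: "\<And>x. F x = (\<Sum>l<h. c l * x ^ (q ^ l))" unfolding F_def linearised_def by simp
  have hb: "\<And>y. F (a * y) = b * F y"
  proof -
    fix y
    have "inv F (F y) = y" using assms(4) unfolding F_def by (simp add: bij_is_inj)
    then show "F (a * y) = b * F y" using hb0[rule_format, of "F y"] unfolding F_def by simp
  qed

  obtain p e where p: "prime p" and e: "e > 0" and qpe: "q = p ^ e"
    using assms(1) unfolding primepow_def by blast
  have q1: "q > 1" using p e qpe
    by (metis one_less_power prime_gt_1_nat)
  have sumtr: "(\<Sum>x\<in>(UNIV::'a set). x + 1) = (\<Sum>x\<in>(UNIV::'a set). x)"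
    by (rule sum.reindex_bij_witness[of _ "\<lambda>x. x - 1" "\<lambda>x. x + 1"]) auto
  have "(\<Sum>x\<in>(UNIV::'a set). x + 1) = (\<Sum>x\<in>(UNIV::'a set). x) + of_nat (card (UNIV::'a set))"
    by (simp add: sum.distrib)
  then have cz: "of_nat (card (UNIV::'a set)) = (0::'a)" using sumtr by simp
  have "card (UNIV::'a set) = p ^ (e * h)" using assms(3) qpe by (simp add: power_mult)
  then have "(of_nat p :: 'a) ^ (e * h) = 0" using cz by simp
  then have pz: "of_nat p = (0::'a)" by simp
  have fa: "\<And>x y::'a. (x + y) ^ p = x ^ p + y ^ p" using frob_add_prime[OF p pz] .
  have qadd: "\<And>(x::'a) y l. (x + y) ^ (q ^ l) = x ^ (q ^ l) + y ^ (q ^ l)"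
  proof -
    fix x y :: 'a and l
    have "q ^ l = p ^ (e * l)" using qpe by (simp add: power_mult)
    then show "(x + y) ^ (q ^ l) = x ^ (q ^ l) + y ^ (q ^ l)"
      using frob_add_pow[OF fa] by simp
  qed
  have m1: "(-1::'a) ^ q = -1"
  proof -
    have "(1 + (-1::'a)) ^ (q ^ 1) = 1 ^ (q ^ 1) + (-1) ^ (q ^ 1)" by (rule qadd)
    then have "0 = 1 + (-1::'a) ^ q" using q1 by (simp add: zero_power)
    then have "(-1::'a) ^ q = 0 - 1" by (metis add_diff_cancel_left')
    then show ?thesis by simp
  qed
  have neg: "\<And>(x::'a) l. (- x) ^ (q ^ l) = - (x ^ (q ^ l))"
  proof -
    fix x :: 'a and l
    have "(- x) ^ (q ^ l) = (-1) ^ (q ^ l) * x ^ (q ^ l)"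
      by (metis mult_minus1 power_mult_distrib)
    also have "(-1::'a) ^ (q ^ l) = -1" by (rule fq_pow[OF m1])
    finally show "(- x) ^ (q ^ l) = - (x ^ (q ^ l))" by simp
  qed
  define d where "d l = c l * a ^ (q ^ l) - b * c l" for l
  define P where "P = (\<Sum>l<h. monom (d l) (q ^ l))"
  have polyP: "\<And>y. poly P y = 0"
  proof -
    fix y
    have "poly P y = (\<Sum>l<h. d l * y ^ (q ^ l))" unfolding P_def by (simp add: poly_sum poly_monom)
    also have "\<dots> = F (a * y) - b * F y"
      unfolding Fdef d_def by (simp add: sum_subtractf sum_distrib_left power_mult_distrib algebra_simps)
    finally show "poly P y = 0" using hb by simp
  qed
  have degP: "degree P \<le> q ^ (h - 1)" unfolding P_def
  proof (rule degree_sum_le)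
    fix l assume "l \<in> {..<h}"
    then have "q ^ l \<le> q ^ (h - 1)" using q1 by (intro power_increasing) auto
    then show "degree (monom (d l) (q ^ l)) \<le> q ^ (h - 1)"
      using degree_monom_le order_trans by blast
  qed auto
  have "q ^ (h - 1) < q ^ h" using q1 assms(2) by (intro power_strict_increasing) auto
  then have "degree P < card (UNIV::'a set)" using degP assms(3) by simp
  then have P0: "P = 0"
    by (intro poly_eqI_degree[of UNIV]) (auto simp: polyP)
  have dz: "\<And>m. m < h \<Longrightarrow> d m = 0"
  proof -
    fix m assume m: "m < h"
    have "coeff P (q ^ m) = (\<Sum>l<h. if q ^ l = q ^ m then d l else 0)"
      unfolding P_def by (simp add: coeff_sum coeff_monom)
    also have "\<dots> = (\<Sum>l<h. if l = m then d l else 0)"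
      using q1 by (intro sum.cong) (auto simp: power_inject_exp)
    also have "\<dots> = d m" using m by simp
    finally show "d m = 0" using P0 by simp
  qed
  have ab: "\<And>l. l < h \<Longrightarrow> c l \<noteq> 0 \<Longrightarrow> a ^ (q ^ l) = b"
    using dz unfolding d_def by (metis eq_iff_diff_eq_0 mult.commute mult_cancel_left)
  obtain l0 where l0: "l0 < h" "c l0 \<noteq> 0"
  proof (rule ccontr)
    assume "\<not> thesis"
    then have "\<forall>l<h. c l = 0" using that by blast
    then have "F 0 = F 1" unfolding Fdef by simp
    moreover have "inj F" using assms(4) unfolding F_def by (simp add: bij_is_inj)
    ultimately show False by (metis injD zero_neq_one)
  qed
  define S where "S = {\<alpha>::'a. \<forall>l<h. c l \<noteq> 0 \<longrightarrow> \<alpha> ^ (q ^ l) = \<alpha> ^ (q ^ l0)}"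
  have subS: "is_subfield S"
    unfolding is_subfield_def
  proof (intro conjI ballI)
    show "0 \<in> S" unfolding S_def using q1 by (simp add: zero_power)
    show "1 \<in> S" unfolding S_def by simp
    fix x assume x: "x \<in> S"
    show "- x \<in> S" using x unfolding S_def by (simp add: neg)
    show "inverse x \<in> S" using x unfolding S_def by (simp add: power_inverse)
    fix y assume y: "y \<in> S"
    show "x + y \<in> S" using x y unfolding S_def by (simp add: qadd)
    show "x * y \<in> S" using x y unfolding S_def by (simp add: power_mult_distrib)
  qed
  have FqS: "Fq q \<subseteq> S" unfolding S_def Fq_def by (auto simp: fq_pow)
  have aS: "a \<in> S" unfolding S_def using ab l0 by auto
  have KS: "Fq_adj q a \<subseteq> S" unfolding Fq_adj_def using subS FqS aS by blast
  define \<sigma> where "\<sigma> x = x ^ (q ^ l0)" for x :: 'a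
  have inj\<sigma>: "inj \<sigma>"
  proof (rule injI)
    fix x y assume "\<sigma> x = \<sigma> y"
    then have e1: "x ^ (q ^ l0) = y ^ (q ^ l0)" unfolding \<sigma>_def .
    have "(x + - y) ^ (q ^ l0) = x ^ (q ^ l0) + - (y ^ (q ^ l0))" by (simp only: qadd neg)
    then have "(x + - y) ^ (q ^ l0) = 0" using e1 by simp
    then have "x + - y = 0" by simp
    then show "x = y" by (simp add: add_eq_0_iff2)
  qed
  have aut: "field_automorphism \<sigma>"
    unfolding field_automorphism_def
  proof (intro conjI allI)
    show "bij \<sigma>" using inj\<sigma> finite_UNIV_inj_surj[of \<sigma>] by (simp add: bij_def)
    fix x y
    show "\<sigma> (x + y) = \<sigma> x + \<sigma> y" unfolding \<sigma>_def by (rule qadd)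
    show "\<sigma> (x * y) = \<sigma> x * \<sigma> y" unfolding \<sigma>_def by (simp add: power_mult_distrib)
  next
    show "\<sigma> 1 = 1" unfolding \<sigma>_def by simp
  qed
  have "\<forall>\<alpha>\<in>Fq_adj q a. \<forall>x. F (\<alpha> * x) = \<sigma> \<alpha> * F x"
  proof (intro ballI allI)
    fix \<alpha> x assume "\<alpha> \<in> Fq_adj q a"
    then have aS: "\<alpha> \<in> S" using KS by blast
    have "F (\<alpha> * x) = (\<Sum>l<h. c l * (\<alpha> * x) ^ (q ^ l))" by (rule Fdef)
    also have "\<dots> = (\<Sum>l<h. \<sigma> \<alpha> * (c l * x ^ (q ^ l)))"
    proof (rule sum.cong)
      fix l assume "l \<in> {..<h}"
      then show "c l * (\<alpha> * x) ^ (q ^ l) = \<sigma> \<alpha> * (c l * x ^ (q ^ l))"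
        using aS unfolding S_def \<sigma>_def by (cases "c l = 0") (auto simp: power_mult_distrib)
    qed simp
    also have "\<dots> = \<sigma> \<alpha> * F x" unfolding Fdef by (simp add: sum_distrib_left)
    finally show "F (\<alpha> * x) = \<sigma> \<alpha> * F x" .
  qed
  then show "semi_linear_over (Fq_adj q a) (linearised q h c)"
    unfolding semi_linear_over_def F_def using aut by blast
qed

end
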